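(* Let $G$ be a finite group with a fixed supercharacter theory and let $\iota,\alpha,\beta\in\mathrm{scf}(G)$ satisfy $\langle\iota,\alpha\rangle=\langle\iota,\beta\rangle=1$. Then the Hopf algebra $\mathcal{H}_{(\iota,\alpha,\beta)}$ is free as an algebra.
   Context: Supercharacter theory: set partition $\mathtt{Cl}$ of $G$ and pairwise orthogonal characters $\mathtt{Ch}$ forming a basis of $\mathrm{scf}(G)=\{\psi:G\to\mathbb{C}$ constant on blocks of $\mathtt{Cl}\}$, with $\mathbf{reg}\in\mathrm{scf}(G)$, $\mathbb{1}\in\mathtt{Ch}$; $\langle\psi,\gamma\rangle=|G|^{-1}\sum_g\psi(g)\overline{\gamma(g)}$. For $n\ge1$, $G^{n-1}=G\times\cdots\times G\times\{1\}$ ($n-1$ copies of $G$), and $\mathrm{scf}(G^{n-1})$ is spanned by $\psi_1\otimes\cdots\otimes\psi_{n-1}\otimes\chi^{()}:(g_1,\dots,g_{n-1},1)\mapsto\prod\psi_j(g_j)$, $\psi_j\in\mathrm{scf}(G)$ ($\chi^{()}$ the trivial character of the trivial group; $\mathrm{scf}(G^{n-1})\cong\mathrm{scf}(G)^{\otimes(n-1)}$); $\mathrm{scf}(G^{-1}):=\mathbb{C}\chi^\emptyset$. $\mathcal{H}_{(\iota,\alpha,\beta)}=\bigoplus_{n\ge0}\mathrm{scf}(G^{n-1})$ (degree $n$ part $\mathrm{scf}(G^{n-1})$), a graded connected Hopf algebra with unit $\chi^\emptyset$, product $(\gamma_1\otimes\cdots\otimes\gamma_{m-1}\otimes\chi^{()})\cdot(\psi_1\otimes\cdots\otimes\psi_{n-1}\otimes\chi^{()})=\gamma_1\otimes\cdots\otimes\gamma_{m-1}\otimes\iota\otimes\psi_1\otimes\cdots\otimes\psi_{n-1}\otimes\chi^{()}$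 (extended bilinearly), and coproduct $\Delta(\psi)=\sum_{A\subseteq[n]}\psi^{A}\otimes\psi^{[n]\setminus A}$ for $\psi=\psi_1\otimes\cdots\otimes\psi_{n-1}\otimes\chi^{()}$, where $\psi^\emptyset=\chi^\emptyset$; for nonempty $A=\{a_1<\dots<a_k\}$, $\psi^{A}=\lambda_A\, x_{a_1}\otimes\cdots\otimes x_{a_{k-1}}\otimes\chi^{()}$ with $x_{a_i}=\psi_{a_i}$ if $a_{i+1}=a_i+1$ and $x_{a_i}=\langle\psi_{a_i},\alpha\rangle\iota$ otherwise, and $\lambda_A=\langle\psi_{a_k},\alpha\rangle$ if $a_k<n$, $\lambda_A=1$ if $a_k=n$; $\psi^{[n]\setminus A}$ is defined the same way for the set $[n]\setminus A$ but with $\beta$ in place of $\alpha$. *)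

theory Defs
  imports "HOL-Algebra.Group" "Jordan_Normal_Form.Matrix"
begin

(* All class functions G -> C are represented as functions 'g => complex vanishing
   outside carrier G. *)

definition mat_trace :: "complex mat \<Rightarrow> complex" where
  "mat_trace A = (\<Sum>i<dim_row A. A $$ (i, i))"

definition is_character :: "('g, 'b) monoid_scheme \<Rightarrow> ('g \<Rightarrow> complex) \<Rightarrow> bool" where
  "is_character G \<chi> \<longleftrightarrow>
     (\<forall>x. x \<notin> carrier G \<longrightarrow> \<chi> x = 0) \<and>
     (\<exists>(d::nat) (\<rho>::'g \<Rightarrow> complex mat). d > 0 \<and>
        (\<forall>g\<in>carrier G. \<rho> g \<in> carrier_mat d d) \<and>
        \<rho> \<one>\<^bsub>G\<^esub> = 1\<^sub>m d \<and>
        (\<forall>g\<in>carrier G. \<forall>h\<in>carrier G. \<rho> (g \<otimes>\<^bsub>G\<^esub> h) = \<rho> g * \<rho> h) \<and>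
        (\<forall>g\<in>carrier G. \<chi> g = mat_trace (\<rho> g)))"

definition cinner :: "('g, 'b) monoid_scheme \<Rightarrow> ('g \<Rightarrow> complex) \<Rightarrow> ('g \<Rightarrow> complex) \<Rightarrow> complex" where
  "cinner G \<psi> \<gamma> = (\<Sum>g\<in>carrier G. \<psi> g * cnj (\<gamma> g)) / of_nat (card (carrier G))"

definition scf :: "('g, 'b) monoid_scheme \<Rightarrow> 'g set set \<Rightarrow> ('g \<Rightarrow> complex) set" where
  "scf G Cl = {\<psi>. (\<forall>x. x \<notin> carrier G \<longrightarrow> \<psi> x = 0) \<and>
                   (\<forall>B\<in>Cl. \<forall>x\<in>B. \<forall>y\<in>B. \<psi> x = \<psi> y)}"

definition regular_char :: "('g, 'b) monoid_scheme \<Rightarrow> 'g \<Rightarrow> complex" where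
  "regular_char G g = (if g = \<one>\<^bsub>G\<^esub> then of_nat (card (carrier G)) else 0)"

definition trivial_char :: "('g, 'b) monoid_scheme \<Rightarrow> 'g \<Rightarrow> complex" where
  "trivial_char G g = (if g \<in> carrier G then 1 else 0)"

definition fspan :: "('g \<Rightarrow> complex) set \<Rightarrow> ('g \<Rightarrow> complex) set" where
  "fspan S = {f. \<exists>T c. finite T \<and> T \<subseteq> S \<and> f = (\<lambda>x. \<Sum>t\<in>T. c t * t x)}"

definition flin_indep :: "('g \<Rightarrow> complex) set \<Rightarrow> bool" where
  "flin_indep S \<longleftrightarrow> (\<forall>T c. finite T \<and> T \<subseteq> S \<and> (\<lambda>x. \<Sum>t\<in>T. c t * t x) = (\<lambda>x. 0)
                        \<longrightarrow> (\<forall>t\<in>T. c t = 0))"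

definition supercharacter_theory ::
  "('g, 'b) monoid_scheme \<Rightarrow> 'g set set \<Rightarrow> ('g \<Rightarrow> complex) set \<Rightarrow> bool" where
  "supercharacter_theory G Cl Ch \<longleftrightarrow>
     \<comment> \<open>Cl is a set partition of G\<close>
     (\<Union>Cl = carrier G) \<and> (\<forall>B\<in>Cl. B \<noteq> {}) \<and>
     (\<forall>B\<in>Cl. \<forall>C\<in>Cl. B \<noteq> C \<longrightarrow> B \<inter> C = {}) \<and>
     \<comment> \<open>Ch: pairwise orthogonal characters forming a basis of scf(G)\<close>
     (\<forall>\<chi>\<in>Ch. is_character G \<chi>) \<and>
     (\<forall>\<chi>\<in>Ch. \<forall>\<psi>\<in>Ch. \<chi> \<noteq> \<psi> \<longrightarrow> cinner G \<chi> \<psi> = 0) \<and>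
     Ch \<subseteq> scf G Cl \<and> flin_indep Ch \<and> fspan Ch = scf G Cl \<and>
     regular_char G \<in> scf G Cl \<and> trivial_char G \<in> Ch"

(* The graded pieces.  scf(G^{k}) for k = n-1 is represented as the functions on
   words of length k over G that vanish off G^k and are constant on products
   B_1 x ... x B_k of blocks of Cl (this is scf(G)^{tensor k}).  For degree 0
   (scf(G^{-1}) = C chi^emptyset) and degree 1 (scf(G^0) = C chi^()) this is the
   one-dimensional space of functions supported on the empty word. *)
definition scf_pow :: "('g, 'b) monoid_scheme \<Rightarrow> 'g set set \<Rightarrow> nat \<Rightarrow> ('g list \<Rightarrow> complex) set" where
  "scf_pow G Cl k = {f. (\<forall>w. \<not> (length w = k \<and> set w \<subseteq> carrier G) \<longrightarrow> f w = 0) \<and>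
      (\<forall>u v. length u = k \<and> length v = k \<and> (\<forall>i<k. \<exists>B\<in>Cl. u ! i \<in> B \<and> v ! i \<in> B)
             \<longrightarrow> f u = f v)}"

type_synonym 'g helt = "nat \<Rightarrow> 'g list \<Rightarrow> complex"

(* elements of H = direct sum over n of scf(G^{n-1}); x n is the degree-n component *)
definition H_carrier :: "('g, 'b) monoid_scheme \<Rightarrow> 'g set set \<Rightarrow> 'g helt set" where
  "H_carrier G Cl = {x. finite {n. x n \<noteq> (\<lambda>w. 0)} \<and> (\<forall>n. x n \<in> scf_pow G Cl (n - 1))}"

definition hmul :: "('g \<Rightarrow> complex) \<Rightarrow> nat \<Rightarrow> nat \<Rightarrow> ('g list \<Rightarrow> complex) \<Rightarrow> ('g list \<Rightarrow> complex)
                     \<Rightarrow> ('g list \<Rightarrow> complex)" where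
  "hmul \<iota> m n f g =
     (if m = 0 then (\<lambda>w. f [] * g w)
      else if n = 0 then (\<lambda>w. f w * g [])
      else (\<lambda>w. if length w = m + n - 1
                then f (take (m - 1) w) * \<iota> (w ! (m - 1)) * g (drop m w) else 0))"

definition Hmult :: "('g \<Rightarrow> complex) \<Rightarrow> 'g helt \<Rightarrow> 'g helt \<Rightarrow> 'g helt" where
  "Hmult \<iota> x y = (\<lambda>k w. \<Sum>m\<le>k. hmul \<iota> m (k - m) (x m) (y (k - m)) w)"

definition Hunit :: "'g helt" where
  "Hunit = (\<lambda>n w. if n = 0 \<and> w = [] then 1 else 0)"

fun Hword :: "('g \<Rightarrow> complex) \<Rightarrow> 'g helt list \<Rightarrow> 'g helt" where
  "Hword \<iota> [] = Hunit"
| "Hword \<iota> (z # zs) = Hmult \<iota> z (Hword \<iota> zs)"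

definition H_free_algebra :: "('g, 'b) monoid_scheme \<Rightarrow> 'g set set \<Rightarrow> ('g \<Rightarrow> complex) \<Rightarrow> bool" where
  "H_free_algebra G Cl \<iota> \<longleftrightarrow>
     (\<exists>Z. Z \<subseteq> H_carrier G Cl \<and>
        (\<forall>W c. finite W \<and> W \<subseteq> lists Z \<and>
               (\<lambda>n w. \<Sum>ws\<in>W. c ws * Hword \<iota> ws n w) = (\<lambda>n w. 0)
               \<longrightarrow> (\<forall>ws\<in>W. c ws = 0)) \<and>
        (\<forall>x\<in>H_carrier G Cl. \<exists>W c. finite W \<and> W \<subseteq> lists Z \<and>
               x = (\<lambda>n w. \<Sum>ws\<in>W. c ws * Hword \<iota> ws n w)))"

end

theory Submission
  imports Defs
begin

definition zz :: "'g set list \<Rightarrow> 'g helt" where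
  "zz bs = (\<lambda>n w. if n = Suc (length bs) \<and> list_all2 (\<lambda>x B. x \<in> B) w bs then 1 else 0)"

definition hdeg :: "'g set list list \<Rightarrow> nat" where
  "hdeg bss = sum_list (map (\<lambda>bs. Suc (length bs)) bss)"

definition HW :: "('g \<Rightarrow> complex) \<Rightarrow> 'g set list list \<Rightarrow> 'g helt" where
  "HW \<iota> bss = Hword \<iota> (map zz bss)"

lemma hdeg_simps[simp]: "hdeg [] = 0" "hdeg (bs # bss) = Suc (length bs) + hdeg bss"
  by (simp_all add: hdeg_def)

lemma hdeg_0_iff: "hdeg bss = 0 \<longleftrightarrow> bss = []"
  by (cases bss) auto

lemma hmul_zero: "hmul \<iota> m k (\<lambda>w. 0) g w = 0"
  by (simp add: hmul_def)

lemma Hword_cons_zz: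
  "Hword \<iota> (zz bs # ws) n w =
    (if Suc (length bs) \<le> n then hmul \<iota> (Suc (length bs)) (n - Suc (length bs))
        (\<lambda>w. if list_all2 (\<lambda>x B. x \<in> B) w bs then 1 else 0) (Hword \<iota> ws (n - Suc (length bs))) w
     else 0)"
proof -
  let ?p = "Suc (length bs)"
  have "Hword \<iota> (zz bs # ws) n w = (\<Sum>m\<le>n. hmul \<iota> m (n - m) (zz bs m) (Hword \<iota> ws (n - m)) w)"
    by (simp add: Hmult_def)
  also have "\<dots> = (\<Sum>m\<le>n. if m = ?p then hmul \<iota> ?p (n - ?p)
        (\<lambda>w. if list_all2 (\<lambda>x B. x \<in> B) w bs then 1 else 0) (Hword \<iota> ws (n - ?p)) w else 0)"
  proof (rule sum.cong[OF refl])
    fix m assume "m \<in> {..n}"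
    show "hmul \<iota> m (n - m) (zz bs m) (Hword \<iota> ws (n - m)) w = (if m = ?p then hmul \<iota> ?p (n - ?p)
        (\<lambda>w. if list_all2 (\<lambda>x B. x \<in> B) w bs then 1 else 0) (Hword \<iota> ws (n - ?p)) w else 0)"
    proof (cases "m = ?p")
      case True then show ?thesis by (simp add: zz_def)
    next
      case False
      then have "zz bs m = (\<lambda>w. 0)" by (simp add: zz_def fun_eq_iff)
      then show ?thesis using False by (simp add: hmul_zero)
    qed
  qed
  also have "\<dots> = (if ?p \<le> n then hmul \<iota> ?p (n - ?p)
        (\<lambda>w. if list_all2 (\<lambda>x B. x \<in> B) w bs then 1 else 0) (Hword \<iota> ws (n - ?p)) w else 0)"
    by (simp add: sum.delta)
  finally show ?thesis .
qed

lemma HW_Cons: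
  "HW \<iota> (bs # bss) n w =
    (if Suc (length bs) \<le> n then hmul \<iota> (Suc (length bs)) (n - Suc (length bs))
        (\<lambda>w. if list_all2 (\<lambda>x B. x \<in> B) w bs then 1 else 0) (HW \<iota> bss (n - Suc (length bs))) w
     else 0)"
  unfolding HW_def by (simp only: list.map Hword_cons_zz)

lemma HW_Nil: "HW \<iota> [] n w = (if n = 0 \<and> w = [] then 1 else 0)"
  by (simp add: HW_def Hunit_def)

lemma HW_homog: "HW \<iota> bss n w \<noteq> 0 \<Longrightarrow> n = hdeg bss \<and> length w = n - 1"
proof (induction bss arbitrary: n w)
  case Nil then show ?case by (simp add: HW_Nil split: if_splits)
next
  case (Cons bs bss)
  let ?p = "Suc (length bs)"
  from Cons.prems have le: "?p \<le> n"
    and nz: "hmul \<iota> ?p (n - ?p) (\<lambda>w. if list_all2 (\<lambda>x B. x \<in> B) w bs then 1 else 0)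
              (HW \<iota> bss (n - ?p)) w \<noteq> 0"
    by (auto simp: HW_Cons split: if_splits)
  show ?case
  proof (cases "n - ?p = 0")
    case True
    with nz have "list_all2 (\<lambda>x B. x \<in> B) w bs" "HW \<iota> bss 0 [] \<noteq> 0"
      by (auto simp: hmul_def split: if_splits)
    with Cons.IH[of 0 "[]"] have "length w = length bs" "bss = []"
      by (auto simp: list_all2_lengthD hdeg_0_iff)
    then show ?thesis using True le by simp
  next
    case False
    with nz le have "length w = n - 1" "HW \<iota> bss (n - ?p) (drop ?p w) \<noteq> 0"
      by (auto simp: hmul_def split: if_splits)
    with Cons.IH[of "n - ?p" "drop ?p w"] le show ?thesis by simp
  qed
qed

lemma HW_cons_Nil:
  assumes "2 \<le> n"
  shows "HW \<iota> ([] # bss) n (a # u) = \<iota> a * HW \<iota> bss (n - 1) u"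
proof (cases "HW \<iota> bss (n - 1) u = 0")
  case True
  then show ?thesis using assms by (simp add: HW_Cons hmul_def)
next
  case False
  from HW_homog[OF False] have "length u = n - 2" by simp
  then show ?thesis using assms by (simp add: HW_Cons hmul_def)
qed

lemma HW_cons_Cons:
  assumes "2 \<le> n"
  shows "HW \<iota> ((B # bs) # bss) n (a # u) = (if a \<in> B then 1 else 0) * HW \<iota> (bs # bss) (n - 1) u"
  using assms
  by (auto simp: HW_Cons hmul_def take_Suc_Cons nth_Cons' Suc_diff_le)

lemma HW_cons_gen:
  assumes "2 \<le> n" "bss \<noteq> []"
  shows "HW \<iota> bss n (a # u) = (if hd bss = [] then \<iota> a * HW \<iota> (tl bss) (n - 1) u
     else (if a \<in> hd (hd bss) then 1 else 0) * HW \<iota> (tl (hd bss) # tl bss) (n - 1) u)"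
proof -
  obtain bs rest where b: "bss = bs # rest" using assms(2) by (cases bss) auto
  show ?thesis
  proof (cases bs)
    case Nil then show ?thesis using b assms HW_cons_Nil by simp
  next
    case (Cons B bs') then show ?thesis using b assms HW_cons_Cons[of n \<iota> B bs' rest a u] by simp
  qed
qed

lemma HW_one: "HW \<iota> [[]] (Suc 0) [] = 1"
  by (simp add: HW_Cons HW_Nil hmul_def)

lemma tl_lists: "xs \<in> lists A \<Longrightarrow> tl xs \<in> lists A"
  by (cases xs) auto

locale HF =
  fixes G :: "('g, 'b) monoid_scheme" and Cl :: "'g set set" and \<iota> :: "'g \<Rightarrow> complex"
    and g0 :: 'g and B0 :: "'g set"
  assumes Cl_Un: "\<Union>Cl = carrier G" and Cl_ne: "\<forall>B\<in>Cl. B \<noteq> {}"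
    and Cl_disj: "\<forall>B\<in>Cl. \<forall>C\<in>Cl. B \<noteq> C \<longrightarrow> B \<inter> C = {}"
    and fin: "finite (carrier G)" and iota: "\<iota> \<in> scf G Cl"
    and g0: "g0 \<in> B0" "B0 \<in> Cl" "\<iota> g0 \<noteq> 0"
begin

definition r :: "'g set \<Rightarrow> 'g" where "r B = (SOME x. x \<in> B)"

lemma r_in: "B \<in> Cl \<Longrightarrow> r B \<in> B"
  unfolding r_def using Cl_ne by (meson ex_in_conv someI_ex)

lemma disj_mem: "B \<in> Cl \<Longrightarrow> C \<in> Cl \<Longrightarrow> x \<in> B \<Longrightarrow> x \<in> C \<Longrightarrow> B = C"
  using Cl_disj by blast

lemma indep:
  "finite V \<Longrightarrow> V \<subseteq> lists (lists (Cl - {B0})) \<Longrightarrow> \<forall>bss\<in>V. hdeg bss = n \<Longrightarrow>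
   (\<forall>w. (\<Sum>bss\<in>V. c bss * HW \<iota> bss n w) = 0) \<Longrightarrow> \<forall>bss\<in>V. c bss = 0"
proof (induction n arbitrary: V c)
  case 0
  then have V: "V \<subseteq> {[]}" by (auto simp: hdeg_0_iff)
  show ?case
  proof (cases "V = {}")
    case False
    with V have "V = {[]}" by auto
    with 0(4)[rule_format, of "[]"] show ?thesis by (simp add: HW_Nil)
  qed simp
next
  case (Suc n)
  show ?case
  proof (cases "n = 0")
    case True
    have "bss = [[]]" if "bss \<in> V" for bss
    proof -
      from that Suc.prems(3) True have "hdeg bss = 1" by simp
      then show ?thesis by (cases bss) (auto simp: hdeg_0_iff)
    qed
    then have V: "V \<subseteq> {[[]]}" by auto
    show ?thesis
    proof (cases "V = {}")
      case False
      with V have "V = {[[]]}" by auto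
      with Suc.prems(4)[rule_format, of "[]"] True show ?thesis by (simp add: HW_one)
    qed simp
  next
    case False
    then have n2: "2 \<le> Suc n" by simp
    have ne: "bss \<noteq> []" if "bss \<in> V" for bss
      using that Suc.prems(3) by auto
    have Vl: "bss \<in> lists (lists (Cl - {B0}))" if "bss \<in> V" for bss
      using that Suc.prems(2) by auto
    define Ve where "Ve = {bss\<in>V. hd bss = []}"
    have Ve_form: "bss = [] # tl bss" if "bss \<in> Ve" for bss
    proof -
      from that have "bss \<in> V" "hd bss = []" by (simp_all add: Ve_def)
      with ne[of bss] show ?thesis by (cases bss) simp_all
    qed
    have step1: "\<forall>bss\<in>Ve. c bss = 0"
    proof -
      have eq: "(\<Sum>bss\<in>V. c bss * HW \<iota> bss (Suc n) (g0 # u)) =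
                \<iota> g0 * (\<Sum>r\<in>tl ` Ve. c ([] # r) * HW \<iota> r n u)" for u
      proof -
        have "(\<Sum>bss\<in>V. c bss * HW \<iota> bss (Suc n) (g0 # u)) =
              (\<Sum>bss\<in>V. if bss \<in> Ve then \<iota> g0 * (c bss * HW \<iota> (tl bss) n u) else 0)"
        proof (rule sum.cong[OF refl])
          fix bss assume b: "bss \<in> V"
          show "c bss * HW \<iota> bss (Suc n) (g0 # u) =
                (if bss \<in> Ve then \<iota> g0 * (c bss * HW \<iota> (tl bss) n u) else 0)"
          proof (cases "hd bss = []")
            case True then show ?thesis using b HW_cons_gen[OF n2 ne[OF b]] by (simp add: Ve_def)
          next
            case F: False
            have "hd bss \<in> set bss" using ne[OF b] by simp
            then have "set (hd bss) \<subseteq> Cl - {B0}" using Vl[OF b] by (auto simp: in_lists_conv_set)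
            then have "hd (hd bss) \<in> Cl - {B0}" using hd_in_set[OF F] by blast
            then have "g0 \<notin> hd (hd bss)" using disj_mem g0 by blast
            then show ?thesis using F b HW_cons_gen[OF n2 ne[OF b]] by (simp add: Ve_def)
          qed
        qed
        also have "\<dots> = (\<Sum>bss\<in>Ve. \<iota> g0 * (c bss * HW \<iota> (tl bss) n u))"
          using Suc.prems(1) by (simp add: sum.inter_filter Ve_def)
        also have "\<dots> = \<iota> g0 * (\<Sum>bss\<in>Ve. c ([] # tl bss) * HW \<iota> (tl bss) n u)"
        proof -
          have "c bss = c ([] # tl bss)" if "bss \<in> Ve" for bss
            using Ve_form[OF that] by (rule arg_cong)
          then show ?thesis by (simp add: sum_distrib_left cong: sum.cong)
        qed
        also have "(\<Sum>bss\<in>Ve. c ([] # tl bss) * HW \<iota> (tl bss) n u) =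
                   (\<Sum>r\<in>tl ` Ve. c ([] # r) * HW \<iota> r n u)"
        proof -
          have "inj_on tl Ve"
          proof (rule inj_onI)
            fix x y assume "x \<in> Ve" "y \<in> Ve" "tl x = tl y"
            then show "x = y" using Ve_form by metis
          qed
          then show ?thesis by (simp add: sum.reindex)
        qed
        finally show ?thesis .
      qed
      have "\<forall>r\<in>tl ` Ve. c ([] # r) = 0"
      proof (rule Suc.IH)
        show "finite (tl ` Ve)" using Suc.prems(1) by (simp add: Ve_def)
        show "tl ` Ve \<subseteq> lists (lists (Cl - {B0}))"
        proof
          fix rr assume "rr \<in> tl ` Ve"
          then obtain bss where "bss \<in> Ve" "rr = tl bss" by blast
          then have "bss \<in> V" "rr = tl bss" by (simp_all add: Ve_def)
          then show "rr \<in> lists (lists (Cl - {B0}))" using tl_lists[OF Vl[of bss]] by simp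
        qed
        show "\<forall>r\<in>tl ` Ve. hdeg r = n"
        proof
          fix r assume "r \<in> tl ` Ve"
          then obtain bss where "bss \<in> Ve" "r = tl bss" by auto
          moreover have "hdeg bss = Suc n" using \<open>bss \<in> Ve\<close> Suc.prems(3) by (simp add: Ve_def)
          moreover have "hdeg bss = hdeg ([] # tl bss)" using Ve_form[OF \<open>bss \<in> Ve\<close>] by (rule arg_cong)
          ultimately show "hdeg r = n" by simp
        qed
        show "\<forall>w. (\<Sum>r\<in>tl ` Ve. c ([] # r) * HW \<iota> r n w) = 0"
        proof
          fix w
          have "\<iota> g0 * (\<Sum>r\<in>tl ` Ve. c ([] # r) * HW \<iota> r n w) = 0" using eq Suc.prems(4) by simp
          then show "(\<Sum>r\<in>tl ` Ve. c ([] # r) * HW \<iota> r n w) = 0" using g0(3) by simp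
        qed
      qed
      then show ?thesis using Ve_form by (metis image_eqI)
    qed
    show ?thesis
    proof
      fix bss0 assume b0: "bss0 \<in> V"
      show "c bss0 = 0"
      proof (cases "bss0 \<in> Ve")
        case True then show ?thesis using step1 by blast
      next
        case nVe: False
        define B where "B = hd (hd bss0)"
        have hdl: "hd bss \<in> lists (Cl - {B0})" if "bss \<in> V" for bss
          using Vl[OF that] ne[OF that] by (metis hd_in_set in_listsD)
        have hdB: "hd (hd bss) \<in> Cl - {B0}" if "bss \<in> V" "bss \<notin> Ve" for bss
          using hdl[OF that(1)] that by (auto simp: Ve_def)
        have B: "B \<in> Cl" "B \<noteq> B0" using hdB[OF b0 nVe] by (auto simp: B_def)
        define VB where "VB = {bss\<in>V. bss \<notin> Ve \<and> hd (hd bss) = B}"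
        define tlB :: "'g set list list \<Rightarrow> 'g set list list" where "tlB bss = tl (hd bss) # tl bss" for bss
        define consB :: "'g set list list \<Rightarrow> 'g set list list" where "consB rr = (B # hd rr) # tl rr" for rr
        have cons_tl: "consB (tlB bss) = bss" if "bss \<in> VB" for bss
        proof -
          from that have "bss \<noteq> []" "hd bss \<noteq> []" "hd (hd bss) = B" using ne by (auto simp: VB_def Ve_def)
          then show ?thesis unfolding consB_def tlB_def by (metis list.collapse list.sel(1,3))
        qed
        have eq: "(\<Sum>bss\<in>V. c bss * HW \<iota> bss (Suc n) (r B # u)) =
                  (\<Sum>rr\<in>tlB ` VB. c (consB rr) * HW \<iota> rr n u)" for u
        proof -
          have "(\<Sum>bss\<in>V. c bss * HW \<iota> bss (Suc n) (r B # u)) =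
                (\<Sum>bss\<in>V. if bss \<in> VB then c bss * HW \<iota> (tlB bss) n u else 0)"
          proof (rule sum.cong[OF refl])
            fix bss assume b: "bss \<in> V"
            show "c bss * HW \<iota> bss (Suc n) (r B # u) =
                  (if bss \<in> VB then c bss * HW \<iota> (tlB bss) n u else 0)"
            proof (cases "bss \<in> Ve")
              case True then show ?thesis using step1 by (simp add: VB_def)
            next
              case F: False
              then have hne: "hd bss \<noteq> []" by (simp add: Ve_def b)
              have "r B \<in> hd (hd bss) \<longleftrightarrow> hd (hd bss) = B"
                using hdB[OF b F] B r_in disj_mem by blast
              then show ?thesis using F b hne HW_cons_gen[OF n2 ne[OF b]] by (simp add: VB_def tlB_def)
            qed
          qed
          also have "\<dots> = (\<Sum>bss\<in>VB. c bss * HW \<iota> (tlB bss) n u)"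
            using Suc.prems(1) unfolding VB_def by (subst sum.inter_filter) simp_all
          also have "\<dots> = (\<Sum>rr\<in>tlB ` VB. c (consB rr) * HW \<iota> rr n u)"
          proof -
            have "inj_on tlB VB" by (metis cons_tl inj_onI)
            then show ?thesis by (simp add: sum.reindex cons_tl)
          qed
          finally show ?thesis .
        qed
        have "\<forall>rr\<in>tlB ` VB. c (consB rr) = 0"
        proof (rule Suc.IH)
          show "finite (tlB ` VB)" using Suc.prems(1) by (simp add: VB_def)
          show "tlB ` VB \<subseteq> lists (lists (Cl - {B0}))"
          proof
            fix rr assume "rr \<in> tlB ` VB"
            then obtain bss where bb: "bss \<in> VB" "rr = tlB bss" by auto
            then have bV: "bss \<in> V" by (simp add: VB_def)
            have h1: "tl (hd bss) \<in> lists (Cl - {B0})" by (rule tl_lists[OF hdl[OF bV]])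
            have h2: "tl bss \<in> lists (lists (Cl - {B0}))" by (rule tl_lists[OF Vl[OF bV]])
            show "rr \<in> lists (lists (Cl - {B0}))" using bb(2) h1 h2 unfolding tlB_def by simp
          qed
          show "\<forall>rr\<in>tlB ` VB. hdeg rr = n"
          proof
            fix rr assume "rr \<in> tlB ` VB"
            then obtain bss where bb: "bss \<in> VB" "rr = tlB bss" by auto
            have "hdeg bss = Suc n" using bb(1) Suc.prems(3) by (simp add: VB_def)
            moreover have "bss = (B # tl (hd bss)) # tl bss" using cons_tl[OF bb(1)] by (simp add: consB_def tlB_def)
            ultimately show "hdeg rr = n" using bb(2) unfolding tlB_def
              by (metis add_Suc hdeg_simps(2) length_Cons nat.inject)
          qed
          show "\<forall>w. (\<Sum>rr\<in>tlB ` VB. c (consB rr) * HW \<iota> rr n w) = 0"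
            using eq Suc.prems(4) by metis
        qed
        moreover have "bss0 \<in> VB" using b0 nVe by (simp add: VB_def B_def)
        ultimately show ?thesis using cons_tl by (metis image_eqI)
      qed
    qed
  qed
qed


lemma Cl_sub: "B \<in> Cl \<Longrightarrow> B \<subseteq> carrier G"
  using Cl_Un by blast

lemma in_Cl: "a \<in> carrier G \<Longrightarrow> \<exists>B\<in>Cl. a \<in> B"
  using Cl_Un by blast

lemma finite_Cl: "finite Cl"
proof -
  have "Cl \<subseteq> Pow (carrier G)" using Cl_sub by blast
  then show ?thesis using finite_subset finite_Pow_iff fin by blast
qed

lemma iota_out: "a \<notin> carrier G \<Longrightarrow> \<iota> a = 0"
  using iota by (simp add: scf_def)

lemma iota_block: "B \<in> Cl \<Longrightarrow> a \<in> B \<Longrightarrow> b \<in> B \<Longrightarrow> \<iota> a = \<iota> b"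
  using iota unfolding scf_def by blast

lemma scf_pow_out: "f \<in> scf_pow G Cl m \<Longrightarrow> \<not> (length w = m \<and> set w \<subseteq> carrier G) \<Longrightarrow> f w = 0"
  by (simp add: scf_pow_def)

lemma scf_pow_const:
  assumes "f \<in> scf_pow G Cl m" "length u = m" "length v = m"
    "\<forall>i<m. \<exists>B\<in>Cl. u ! i \<in> B \<and> v ! i \<in> B"
  shows "f u = f v"
proof -
  have H: "\<forall>u v. length u = m \<and> length v = m \<and> (\<forall>i<m. \<exists>B\<in>Cl. u ! i \<in> B \<and> v ! i \<in> B)
             \<longrightarrow> f u = f v" using assms(1) unfolding scf_pow_def mem_Collect_eq by (rule conjunct2)
  show ?thesis by (rule H[rule_format, OF conjI[OF assms(2) conjI[OF assms(3) assms(4)]]])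
qed

lemma scf_pow_cons:
  assumes f: "f \<in> scf_pow G Cl m" and C: "C \<in> Cl" "a \<in> C" "b \<in> C"
  shows "f (a # u) = f (b # u)"
proof (cases "length (a # u) = m \<and> set u \<subseteq> carrier G")
  case True
  show ?thesis
  proof (rule scf_pow_const[OF f])
    show "length (a # u) = m" "length (b # u) = m" using True by auto
    show "\<forall>i<m. \<exists>B\<in>Cl. (a # u) ! i \<in> B \<and> (b # u) ! i \<in> B"
    proof (intro allI impI)
      fix i assume i: "i < m"
      show "\<exists>B\<in>Cl. (a # u) ! i \<in> B \<and> (b # u) ! i \<in> B"
      proof (cases i)
        case 0 then show ?thesis using C by (intro bexI[of _ C]) simp_all
      next
        case (Suc j)
        then have "j < length u" using i True by auto
        then have "u ! j \<in> carrier G" using True nth_mem by blast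
        then obtain B where B: "B \<in> Cl" "u ! j \<in> B" using in_Cl by blast
        show ?thesis using B Suc by (intro bexI[of _ B]) simp_all
      qed
    qed
  qed
next
  case False
  have "a \<in> carrier G" "b \<in> carrier G" using C Cl_sub by auto
  then have "\<not> (length (a # u) = m \<and> set (a # u) \<subseteq> carrier G)"
    "\<not> (length (b # u) = m \<and> set (b # u) \<subseteq> carrier G)" using False by auto
  then show ?thesis using scf_pow_out[OF f] by metis
qed

lemma scf_pow_shift:
  assumes f: "f \<in> scf_pow G Cl m" and m: "1 \<le> m" and a: "a \<in> carrier G" and b: "b \<in> carrier G"
  shows "(\<lambda>u. x * f (a # u) + y * f (b # u)) \<in> scf_pow G Cl (m - 1)"
  unfolding scf_pow_def
proof (intro CollectI conjI allI impI)
  fix w assume "\<not> (length w = m - 1 \<and> set w \<subseteq> carrier G)"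
  then have "\<not> (length (a # w) = m \<and> set (a # w) \<subseteq> carrier G)"
    "\<not> (length (b # w) = m \<and> set (b # w) \<subseteq> carrier G)" using m by auto
  then show "x * f (a # w) + y * f (b # w) = 0" using scf_pow_out[OF f] by simp
next
  fix u v assume h: "length u = m - 1 \<and> length v = m - 1 \<and>
     (\<forall>i<m - 1. \<exists>B\<in>Cl. u ! i \<in> B \<and> v ! i \<in> B)"
  have "f (c # u) = f (c # v)" if c: "c \<in> carrier G" for c
  proof (rule scf_pow_const[OF f])
    show "length (c # u) = m" "length (c # v) = m" using h m by auto
    show "\<forall>i<m. \<exists>B\<in>Cl. (c # u) ! i \<in> B \<and> (c # v) ! i \<in> B"
    proof (intro allI impI)
      fix i assume i: "i < m"
      show "\<exists>B\<in>Cl. (c # u) ! i \<in> B \<and> (c # v) ! i \<in> B"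
      proof (cases i)
        case 0 then show ?thesis using in_Cl[OF c] by auto
      next
        case (Suc j)
        then have "j < m - 1" using i by auto
        then show ?thesis using h Suc by auto
      qed
    qed
  qed
  then show "x * f (a # u) + y * f (b # u) = x * f (a # v) + y * f (b # v)" using a b by simp
qed

lemma decomp:
  assumes f: "f \<in> scf_pow G Cl m"
  shows "f (a # u) = \<iota> a * (inverse (\<iota> g0) * f (g0 # u)) +
     (\<Sum>B\<in>Cl - {B0}. (if a \<in> B then 1 else 0) *
        (1 * f (r B # u) + (- (\<iota> (r B) / \<iota> g0)) * f (g0 # u)))"
proof (cases "a \<in> carrier G")
  case False
  then have "\<iota> a = 0" using iota_out by simp
  moreover have "a \<notin> B" if "B \<in> Cl" for B using Cl_sub[OF that] False by blast
  moreover have "f (a # u) = 0" using False by (intro scf_pow_out[OF f]) auto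
  ultimately show ?thesis by simp
next
  case True
  then obtain C where C: "C \<in> Cl" "a \<in> C" using in_Cl by blast
  have "(\<Sum>B\<in>Cl - {B0}. (if a \<in> B then 1 else 0) *
        (1 * f (r B # u) + (- (\<iota> (r B) / \<iota> g0)) * f (g0 # u))) =
        (\<Sum>B\<in>Cl - {B0}. if B = C then (f (r B # u) - (\<iota> (r B) / \<iota> g0) * f (g0 # u)) else 0)"
  proof (rule sum.cong[OF refl])
    fix B assume "B \<in> Cl - {B0}"
    then have "a \<in> B \<longleftrightarrow> B = C" using C disj_mem by blast
    then show "(if a \<in> B then 1 else 0) * (1 * f (r B # u) + (- (\<iota> (r B) / \<iota> g0)) * f (g0 # u)) =
        (if B = C then (f (r B # u) - (\<iota> (r B) / \<iota> g0) * f (g0 # u)) else 0)" by simp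
  qed
  also have "\<dots> = (if C \<in> Cl - {B0} then f (r C # u) - (\<iota> (r C) / \<iota> g0) * f (g0 # u) else 0)"
    using finite_Cl by (simp add: sum.delta')
  finally have S: "(\<Sum>B\<in>Cl - {B0}. (if a \<in> B then 1 else 0) *
        (1 * f (r B # u) + (- (\<iota> (r B) / \<iota> g0)) * f (g0 # u))) =
        (if C \<in> Cl - {B0} then f (r C # u) - (\<iota> (r C) / \<iota> g0) * f (g0 # u) else 0)" .
  show ?thesis
  proof (cases "C = B0")
    case True
    have "\<iota> a = \<iota> g0" using iota_block C g0 True by blast
    moreover have "f (a # u) = f (g0 # u)" using scf_pow_cons[OF f C] g0 True by blast
    ultimately show ?thesis using S True g0(3) by simp
  next
    case False
    have "\<iota> a = \<iota> (r C)" using iota_block C r_in by blast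
    moreover have "f (a # u) = f (r C # u)" using scf_pow_cons[OF f C] r_in[OF C(1)] by blast
    ultimately show ?thesis using S False C g0(3) by (simp add: field_simps)
  qed
qed

definition SPg :: "('g set list list \<Rightarrow> bool) \<Rightarrow> 'g helt set" where
  "SPg P = {x. \<exists>V c. finite V \<and> V \<subseteq> lists (lists (Cl - {B0})) \<and> (\<forall>bss\<in>V. P bss) \<and>
      x = (\<lambda>k w. \<Sum>bss\<in>V. c bss * HW \<iota> bss k w)}"

lemma SPg_zero: "(\<lambda>k w. 0) \<in> SPg P"
  unfolding SPg_def by (rule CollectI, rule exI[of _ "{}"]) simp

lemma SPg_add:
  assumes "x \<in> SPg P" "y \<in> SPg P"
  shows "(\<lambda>k w. x k w + y k w) \<in> SPg P"
proof -
  obtain V1 c1 where 1: "finite V1" "V1 \<subseteq> lists (lists (Cl - {B0}))" "\<forall>bss\<in>V1. P bss"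
    "x = (\<lambda>k w. \<Sum>bss\<in>V1. c1 bss * HW \<iota> bss k w)" using assms(1) unfolding SPg_def by blast
  obtain V2 c2 where 2: "finite V2" "V2 \<subseteq> lists (lists (Cl - {B0}))" "\<forall>bss\<in>V2. P bss"
    "y = (\<lambda>k w. \<Sum>bss\<in>V2. c2 bss * HW \<iota> bss k w)" using assms(2) unfolding SPg_def by blast
  define c where "c b = (if b \<in> V1 then c1 b else 0) + (if b \<in> V2 then c2 b else 0)" for b
  have "(\<lambda>k w. x k w + y k w) = (\<lambda>k w. \<Sum>bss\<in>V1 \<union> V2. c bss * HW \<iota> bss k w)"
  proof (intro ext)
    fix k w
    let ?H = "\<lambda>b. HW \<iota> b k w"
    have fU: "finite (V1 \<union> V2)" using 1 2 by simp
    have "(\<Sum>b\<in>V1 \<union> V2. c b * ?H b) =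
      (\<Sum>b\<in>V1 \<union> V2. if b \<in> V1 then c1 b * ?H b else 0) + (\<Sum>b\<in>V1 \<union> V2. if b \<in> V2 then c2 b * ?H b else 0)"
      unfolding sum.distrib[symmetric] by (rule sum.cong) (simp_all add: c_def distrib_right)
    also have "(\<Sum>b\<in>V1 \<union> V2. if b \<in> V1 then c1 b * ?H b else 0) = (\<Sum>b\<in>(V1 \<union> V2) \<inter> V1. c1 b * ?H b)"
      using sum.inter_restrict[OF fU, of "\<lambda>b. c1 b * ?H b" V1] by simp
    also have "(V1 \<union> V2) \<inter> V1 = V1" by blast
    also have "(\<Sum>b\<in>V1 \<union> V2. if b \<in> V2 then c2 b * ?H b else 0) = (\<Sum>b\<in>(V1 \<union> V2) \<inter> V2. c2 b * ?H b)"
      using sum.inter_restrict[OF fU, of "\<lambda>b. c2 b * ?H b" V2] by simp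
    also have "(V1 \<union> V2) \<inter> V2 = V2" by blast
    finally show "x k w + y k w = (\<Sum>b\<in>V1 \<union> V2. c b * ?H b)" using 1(4) 2(4) by simp
  qed
  moreover have "finite (V1 \<union> V2)" "V1 \<union> V2 \<subseteq> lists (lists (Cl - {B0}))" "\<forall>bss\<in>V1 \<union> V2. P bss"
    using 1 2 by auto
  ultimately show ?thesis unfolding SPg_def by (intro CollectI exI[of _ "V1 \<union> V2"] exI[of _ c]) simp
qed

lemma SPg_sum:
  assumes "finite I" "\<forall>i\<in>I. (\<lambda>k w. X i k w) \<in> SPg P"
  shows "(\<lambda>k w. \<Sum>i\<in>I. X i k w) \<in> SPg P"
  using assms
proof (induction I rule: finite_induct)
  case empty then show ?case using SPg_zero by simp
next
  case (insert i I)
  then have "(\<lambda>k w. X i k w + (\<lambda>k w. \<Sum>i\<in>I. X i k w) k w) \<in> SPg P"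
    by (intro SPg_add) auto
  then show ?case using insert by simp
qed

lemma SPg_gen:
  assumes "bss \<in> lists (lists (Cl - {B0}))" "P bss"
  shows "(\<lambda>k w. d * HW \<iota> bss k w) \<in> SPg P"
  unfolding SPg_def using assms
  by (intro CollectI exI[of _ "{bss}"] exI[of _ "\<lambda>_. d"]) simp

lemma SPg_img:
  assumes "finite I" "\<forall>i\<in>I. \<phi> i \<in> lists (lists (Cl - {B0})) \<and> P (\<phi> i)"
  shows "(\<lambda>k w. \<Sum>i\<in>I. d i * HW \<iota> (\<phi> i) k w) \<in> SPg P"
proof (rule SPg_sum[OF assms(1)], rule ballI)
  fix i assume "i \<in> I"
  then show "(\<lambda>k w. d i * HW \<iota> (\<phi> i) k w) \<in> SPg P" using assms(2) by (intro SPg_gen) simp_all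
qed

lemma SPg_mono:
  assumes "x \<in> SPg P" "\<And>b. P b \<Longrightarrow> Q b"
  shows "x \<in> SPg Q"
proof -
  obtain V c where 1: "finite V" "V \<subseteq> lists (lists (Cl - {B0}))" "\<forall>bss\<in>V. P bss"
    "x = (\<lambda>k w. \<Sum>bss\<in>V. c bss * HW \<iota> bss k w)" using assms(1) unfolding SPg_def by blast
  have "\<forall>bss\<in>V. Q bss" using 1(3) assms(2) by blast
  then show ?thesis unfolding SPg_def using 1(1,2,4) by (intro CollectI exI[of _ V] exI[of _ c]) simp
qed

lemma HW_one_full: "HW \<iota> [[]] k w = (if k = 1 \<and> w = [] then 1 else 0)"
proof (cases "HW \<iota> [[]] k w = 0")
  case True
  then show ?thesis using HW_one[of \<iota>] by auto
next
  case False
  from HW_homog[OF False] have "k = 1" "w = []" by auto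
  then show ?thesis using HW_one[of \<iota>] by simp
qed

lemma span_n: "f \<in> scf_pow G Cl (n - 1) \<Longrightarrow> (\<lambda>k w. if k = n then f w else 0) \<in> SPg (\<lambda>bss. hdeg bss = n)"
proof (induction n arbitrary: f)
  case 0
  have "(\<lambda>k w. if k = 0 then f w else 0) = (\<lambda>k w. f [] * HW \<iota> [] k w)"
  proof (intro ext)
    fix k w
    show "(if k = 0 then f w else 0) = f [] * HW \<iota> [] k w"
      using scf_pow_out[OF 0[simplified], of w] by (cases w) (auto simp: HW_Nil)
  qed
  then show ?case using SPg_gen[of "[]" "\<lambda>bss. hdeg bss = 0" "f []"] by simp
next
  case (Suc m)
  show ?case
  proof (cases "m = 0")
    case True
    have "(\<lambda>k w. if k = Suc m then f w else 0) = (\<lambda>k w. f [] * HW \<iota> [[]] k w)"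
    proof (intro ext)
      fix k w
      show "(if k = Suc m then f w else 0) = f [] * HW \<iota> [[]] k w"
        using scf_pow_out[OF Suc.prems, of w] True by (cases w) (auto simp: HW_one_full)
    qed
    then show ?thesis using SPg_gen[of "[[]]" "\<lambda>bss. hdeg bss = Suc m" "f []"] True by simp
  next
    case False
    then have m1: "1 \<le> m" and n2: "2 \<le> Suc m" by auto
    have f: "f \<in> scf_pow G Cl m" using Suc.prems by simp
    have g0c: "g0 \<in> carrier G" using g0 Cl_sub by blast
    define fs where "fs u = inverse (\<iota> g0) * f (g0 # u) + 0 * f (g0 # u)" for u
    define fB where "fB B u = 1 * f (r B # u) + (- (\<iota> (r B) / \<iota> g0)) * f (g0 # u)" for B u
    have fs: "fs \<in> scf_pow G Cl (m - 1)"
      unfolding fs_def by (rule scf_pow_shift[OF f m1 g0c g0c])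
    have fB: "fB B \<in> scf_pow G Cl (m - 1)" if "B \<in> Cl" for B
    proof -
      have "r B \<in> carrier G" using r_in[OF that] Cl_sub[OF that] by blast
      then show ?thesis unfolding fB_def by (rule scf_pow_shift[OF f m1 _ g0c])
    qed
    let ?L = "lists (lists (Cl - {B0}))"
    obtain Vs cs where Vs: "finite Vs" "Vs \<subseteq> ?L" "\<forall>bss\<in>Vs. hdeg bss = m"
      "(\<lambda>k w. if k = m then fs w else 0) = (\<lambda>k w. \<Sum>bss\<in>Vs. cs bss * HW \<iota> bss k w)"
    proof -
      have "(\<lambda>k w. if k = m then fs w else 0) \<in> SPg (\<lambda>bss. hdeg bss = m)"
        using Suc.IH[OF fs] by simp
      then have "\<exists>V c. finite V \<and> V \<subseteq> ?L \<and> (\<forall>bss\<in>V. hdeg bss = m) \<and>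
        (\<lambda>k w. if k = m then fs w else 0) = (\<lambda>k w. \<Sum>bss\<in>V. c bss * HW \<iota> bss k w)"
        by (simp only: SPg_def mem_Collect_eq)
      then show ?thesis using that by blast
    qed
    have "\<forall>B\<in>Cl - {B0}. \<exists>V c. finite V \<and> V \<subseteq> ?L \<and> (\<forall>bss\<in>V. hdeg bss = m) \<and>
      (\<lambda>k w. if k = m then fB B w else 0) = (\<lambda>k w. \<Sum>bss\<in>V. c bss * HW \<iota> bss k w)"
    proof (rule ballI)
      fix B assume "B \<in> Cl - {B0}"
      then have "(\<lambda>k w. if k = m then fB B w else 0) \<in> SPg (\<lambda>bss. hdeg bss = m)"
        using Suc.IH[OF fB] by simp
      then show "\<exists>V c. finite V \<and> V \<subseteq> ?L \<and> (\<forall>bss\<in>V. hdeg bss = m) \<and>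
      (\<lambda>k w. if k = m then fB B w else 0) = (\<lambda>k w. \<Sum>bss\<in>V. c bss * HW \<iota> bss k w)"
        by (simp only: SPg_def mem_Collect_eq)
    qed
    then obtain VB where "\<forall>B\<in>Cl - {B0}. \<exists>c. finite (VB B) \<and> VB B \<subseteq> ?L \<and> (\<forall>bss\<in>VB B. hdeg bss = m) \<and>
      (\<lambda>k w. if k = m then fB B w else 0) = (\<lambda>k w. \<Sum>bss\<in>VB B. c bss * HW \<iota> bss k w)"
      by (rule bchoice[THEN exE])
    then obtain cB where VB0: "\<forall>B\<in>Cl - {B0}. finite (VB B) \<and> VB B \<subseteq> ?L \<and> (\<forall>bss\<in>VB B. hdeg bss = m) \<and>
      (\<lambda>k w. if k = m then fB B w else 0) = (\<lambda>k w. \<Sum>bss\<in>VB B. cB B bss * HW \<iota> bss k w)"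
      by (rule bchoice[THEN exE])
    have VB: "finite (VB B) \<and> VB B \<subseteq> ?L \<and> (\<forall>bss\<in>VB B. hdeg bss = m) \<and>
      (\<lambda>k w. if k = m then fB B w else 0) = (\<lambda>k w. \<Sum>bss\<in>VB B. cB B bss * HW \<iota> bss k w)"
      if "B \<in> Cl - {B0}" for B using VB0 that by (rule bspec)
    define consB :: "'g set \<Rightarrow> 'g set list list \<Rightarrow> 'g set list list" where "consB B bss = (B # hd bss) # tl bss" for B bss
    have ne_m: "bss \<noteq> []" if "hdeg bss = m" for bss using that m1 by auto
    define X where "X = (\<lambda>k w. \<Sum>bss\<in>Vs. cs bss * HW \<iota> ([] # bss) k w)"
    define Y where "Y = (\<lambda>k w. \<Sum>B\<in>Cl - {B0}. \<Sum>bss\<in>VB B. cB B bss * HW \<iota> (consB B bss) k w)"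
    have X: "X \<in> SPg (\<lambda>bss. hdeg bss = Suc m)"
      unfolding X_def using Vs by (intro SPg_img) auto
    have consB_L: "consB B bss \<in> ?L" "hdeg (consB B bss) = Suc m"
      if "B \<in> Cl - {B0}" "bss \<in> ?L" "hdeg bss = m" for B bss
    proof -
      have ne: "bss \<noteq> []" using ne_m[OF that(3)] .
      then have "hd bss \<in> lists (Cl - {B0})" using that(2) by (cases bss) auto
      then show "consB B bss \<in> ?L" using that(1) tl_lists[OF that(2)] unfolding consB_def by simp
      show "hdeg (consB B bss) = Suc m" using that(3) ne unfolding consB_def by (cases bss) auto
    qed
    have Y: "Y \<in> SPg (\<lambda>bss. hdeg bss = Suc m)"
      unfolding Y_def
    proof (rule SPg_sum[OF _ ballI])
      show "finite (Cl - {B0})" using finite_Cl by simp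
      fix B assume B: "B \<in> Cl - {B0}"
      show "(\<lambda>k w. \<Sum>bss\<in>VB B. cB B bss * HW \<iota> (consB B bss) k w) \<in> SPg (\<lambda>bss. hdeg bss = Suc m)"
      proof (rule SPg_img[where d = "cB B" and \<phi> = "consB B" and I = "VB B"])
        show "finite (VB B)" using VB[OF B] by blast
        show "\<forall>i\<in>VB B. consB B i \<in> ?L \<and> hdeg (consB B i) = Suc m"
        proof
          fix bss assume "bss \<in> VB B"
          then have "bss \<in> ?L" "hdeg bss = m" using VB[OF B] by auto
          then show "consB B bss \<in> ?L \<and> hdeg (consB B bss) = Suc m" using consB_L[OF B] by blast
        qed
      qed
    qed
    have eqXY: "(\<lambda>k w. if k = Suc m then f w else 0) = (\<lambda>k w. X k w + Y k w)"
    proof (intro ext)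
      fix k w
      show "(if k = Suc m then f w else 0) = X k w + Y k w"
      proof (cases "k = Suc m")
        case False
        have "HW \<iota> ([] # bss) k w = 0" if "bss \<in> Vs" for bss
          using HW_homog[of \<iota> "[] # bss" k w] False Vs(3) that by auto
        then have "X k w = 0" unfolding X_def by simp
        moreover have "HW \<iota> (consB B bss) k w = 0" if "B \<in> Cl - {B0}" "bss \<in> VB B" for B bss
        proof -
          have h: "bss \<in> ?L" "hdeg bss = m" using VB[OF that(1)] that(2) by auto
          have "hdeg (consB B bss) = Suc m" using consB_L[OF that(1) h] by blast
          then show ?thesis using HW_homog[of \<iota> "consB B bss" k w] False by auto
        qed
        then have "Y k w = 0" unfolding Y_def by simp
        ultimately show ?thesis using False by simp
      next
        case True
        show ?thesis
        proof (cases w)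
          case Nil
          have "HW \<iota> ([] # bss) k w = 0" for bss
            using HW_homog[of \<iota> "[] # bss" k w] True Nil m1 by auto
          then have "X k w = 0" unfolding X_def by simp
          moreover have "HW \<iota> bss k w = 0" for bss
            using HW_homog[of \<iota> bss k w] True Nil m1 by auto
          then have "Y k w = 0" unfolding Y_def by simp
          moreover have "f w = 0" using scf_pow_out[OF f] Nil m1 by simp
          ultimately show ?thesis using True by simp
        next
          case (Cons a u)
          have "X k w = \<iota> a * (\<Sum>bss\<in>Vs. cs bss * HW \<iota> bss m u)"
            unfolding X_def using True Cons HW_cons_gen[OF n2, of "[] # _" \<iota> a u]
            by (simp add: sum_distrib_left mult.left_commute)
          also have "(\<Sum>bss\<in>Vs. cs bss * HW \<iota> bss m u) = fs u"
            using fun_cong[OF fun_cong[OF Vs(4), of m], of u] by simp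
          finally have Xe: "X k w = \<iota> a * fs u" .
          have "Y k w = (\<Sum>B\<in>Cl - {B0}. (if a \<in> B then 1 else 0) * fB B u)"
            unfolding Y_def
          proof (rule sum.cong[OF refl])
            fix B assume B: "B \<in> Cl - {B0}"
            have "(\<Sum>bss\<in>VB B. cB B bss * HW \<iota> (consB B bss) k w) =
                  (\<Sum>bss\<in>VB B. (if a \<in> B then 1 else 0) * (cB B bss * HW \<iota> bss m u))"
            proof (rule sum.cong[OF refl])
              fix bss assume b: "bss \<in> VB B"
              then have ne: "bss \<noteq> []" using VB[OF B] ne_m by blast
              have "HW \<iota> (consB B bss) k w = (if a \<in> B then 1 else 0) * HW \<iota> (hd bss # tl bss) m u"
                using HW_cons_gen[OF n2, of "consB B bss" \<iota> a u] True Cons unfolding consB_def by simp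
              also have "hd bss # tl bss = bss" using ne by simp
              finally show "cB B bss * HW \<iota> (consB B bss) k w = (if a \<in> B then 1 else 0) * (cB B bss * HW \<iota> bss m u)"
                by simp
            qed
            also have "\<dots> = (if a \<in> B then 1 else 0) * fB B u"
              using fun_cong[OF fun_cong[OF conjunct2[OF conjunct2[OF conjunct2[OF VB[OF B]]]], of m], of u]
              by (simp add: sum_distrib_left)
            finally show "(\<Sum>bss\<in>VB B. cB B bss * HW \<iota> (consB B bss) k w) = (if a \<in> B then 1 else 0) * fB B u" .
          qed
          moreover have "f w = \<iota> a * fs u + (\<Sum>B\<in>Cl - {B0}. (if a \<in> B then 1 else 0) * fB B u)"
            using decomp[OF f, of a u] Cons unfolding fs_def fB_def by simp
          ultimately show ?thesis using Xe True by simp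
        qed
      qed
    qed
    show ?thesis unfolding eqXY using SPg_add[OF X Y] .
  qed
qed


lemma zz_in: assumes bs: "bs \<in> lists (Cl - {B0})" shows "zz bs \<in> H_carrier G Cl"
proof -
  have fin1: "finite {n. zz bs n \<noteq> (\<lambda>w. 0)}"
  proof (rule finite_subset[of _ "{Suc (length bs)}"])
    show "{n. zz bs n \<noteq> (\<lambda>w. 0)} \<subseteq> {Suc (length bs)}" by (auto simp: zz_def)
  qed simp
  have bsCl: "bs ! i \<in> Cl" if "i < length bs" for i
    using bs that by (auto simp: in_lists_conv_set)
  have "zz bs n \<in> scf_pow G Cl (n - 1)" for n
    unfolding scf_pow_def
  proof (intro CollectI conjI allI impI)
    fix w assume nw: "\<not> (length w = n - 1 \<and> set w \<subseteq> carrier G)"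
    show "zz bs n w = 0"
    proof (rule ccontr)
      assume "zz bs n w \<noteq> 0"
      then have n: "n = Suc (length bs)" and la: "list_all2 (\<lambda>x B. x \<in> B) w bs"
        by (auto simp: zz_def split: if_splits)
      have lw: "length w = length bs" using la by (rule list_all2_lengthD)
      have "set w \<subseteq> carrier G"
      proof
        fix x assume "x \<in> set w"
        then obtain i where i: "i < length w" "w ! i = x" by (auto simp: in_set_conv_nth)
        then have "x \<in> bs ! i" using la by (auto simp: list_all2_conv_all_nth)
        then show "x \<in> carrier G" using Cl_sub bsCl i lw by auto
      qed
      then show False using nw n lw by simp
    qed
  next
    fix u v assume h: "length u = n - 1 \<and> length v = n - 1 \<and> (\<forall>i<n - 1. \<exists>B\<in>Cl. u ! i \<in> B \<and> v ! i \<in> B)"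
    show "zz bs n u = zz bs n v"
    proof (cases "n = Suc (length bs)")
      case False then show ?thesis by (simp add: zz_def)
    next
      case True
      have "u ! i \<in> bs ! i \<longleftrightarrow> v ! i \<in> bs ! i" if i: "i < length bs" for i
      proof -
        obtain B where B: "B \<in> Cl" "u ! i \<in> B" "v ! i \<in> B" using h True i by auto
        show ?thesis using disj_mem[OF B(1) bsCl[OF i]] B by blast
      qed
      then have "list_all2 (\<lambda>x B. x \<in> B) u bs \<longleftrightarrow> list_all2 (\<lambda>x B. x \<in> B) v bs"
        using h True by (simp add: list_all2_conv_all_nth)
      then show ?thesis by (simp add: zz_def)
    qed
  qed
  then show ?thesis using fin1 by (simp add: H_carrier_def)
qed

lemma span_all:
  assumes x: "x \<in> H_carrier G Cl"
  shows "x \<in> SPg (\<lambda>_. True)"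
proof -
  define N where "N = {n. x n \<noteq> (\<lambda>w. 0)}"
  have finN: "finite N" using x by (simp add: H_carrier_def N_def)
  have xn: "x n \<in> scf_pow G Cl (n - 1)" for n using x by (simp add: H_carrier_def)
  have "x = (\<lambda>k w. \<Sum>n\<in>N. (\<lambda>k w. if k = n then x n w else 0) k w)"
  proof (intro ext)
    fix k w
    show "x k w = (\<Sum>n\<in>N. (\<lambda>k w. if k = n then x n w else 0) k w)"
    proof (cases "k \<in> N")
      case True then show ?thesis using finN by simp
    next
      case False
      then have "x k = (\<lambda>w. 0)" by (simp add: N_def)
      then show ?thesis using False finN by (simp add: sum.delta)
    qed
  qed
  moreover have "(\<lambda>k w. \<Sum>n\<in>N. (\<lambda>k w. if k = n then x n w else 0) k w) \<in> SPg (\<lambda>_. True)"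
  proof (rule SPg_sum[OF finN ballI])
    fix n assume "n \<in> N"
    show "(\<lambda>k w. (\<lambda>k w. if k = n then x n w else 0) k w) \<in> SPg (\<lambda>_. True)"
      using SPg_mono[OF span_n[OF xn[of n]]] by simp
  qed
  ultimately show ?thesis by simp
qed

theorem free: "H_free_algebra G Cl \<iota>"
proof -
  let ?L = "lists (Cl - {B0})"
  define Z where "Z = zz ` ?L"
  define zi where "zi = inv_into ?L zz"
  have zi1: "zz (zi h) = h" "zi h \<in> ?L" if "h \<in> Z" for h
  proof -
    show "zz (zi h) = h" unfolding zi_def by (rule f_inv_into_f) (use that in \<open>simp add: Z_def\<close>)
    show "zi h \<in> ?L" unfolding zi_def by (rule inv_into_into) (use that in \<open>simp add: Z_def\<close>)
  qed
  have mzi1: "map zz (map zi ws) = ws" if "ws \<in> lists Z" for ws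
    using that
  proof (induction ws)
    case (Cons h ws) then show ?case using zi1(1)[of h] by simp
  qed simp
  have mzi2: "map zi ws \<in> lists ?L" if "ws \<in> lists Z" for ws
    using that
  proof (induction ws)
    case (Cons h ws) then show ?case using zi1(2)[of h] by simp
  qed simp
  note mzi = mzi1 mzi2
  have ZH: "Z \<subseteq> H_carrier G Cl" unfolding Z_def using zz_in by blast
  have IND: "\<forall>ws\<in>W. c ws = 0" if W: "finite W" "W \<subseteq> lists Z"
      and S: "(\<lambda>n w. \<Sum>ws\<in>W. c ws * Hword \<iota> ws n w) = (\<lambda>n w. 0)" for W c
  proof
    fix ws0 assume ws0: "ws0 \<in> W"
    define V where "V = map zi ` W"
    define c' where "c' bss = c (map zz bss)" for bss
    have injW: "inj_on (map zi) W"
      by (rule inj_on_inverseI[where g = "map zz"]) (use W mzi in blast)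
    have S': "(\<Sum>bss\<in>V. c' bss * HW \<iota> bss n w) = 0" for n w
    proof -
      have "(\<Sum>bss\<in>V. c' bss * HW \<iota> bss n w) = (\<Sum>ws\<in>W. c' (map zi ws) * HW \<iota> (map zi ws) n w)"
        unfolding V_def using injW by (simp add: sum.reindex)
      also have "\<dots> = (\<Sum>ws\<in>W. c ws * Hword \<iota> ws n w)"
      proof (rule sum.cong[OF refl])
        fix ws assume "ws \<in> W"
        then have "ws \<in> lists Z" using W by blast
        then show "c' (map zi ws) * HW \<iota> (map zi ws) n w = c ws * Hword \<iota> ws n w"
          unfolding c'_def HW_def mzi1[OF \<open>ws \<in> lists Z\<close>] by simp
      qed
      also have "\<dots> = 0" using fun_cong[OF fun_cong[OF S, of n], of w] by simp
      finally show ?thesis .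
    qed
    define bss0 where "bss0 = map zi ws0"
    define n0 where "n0 = hdeg bss0"
    define V0 where "V0 = {bss\<in>V. hdeg bss = n0}"
    have "\<forall>bss\<in>V0. c' bss = 0"
    proof (rule indep)
      show "finite V0" using W by (simp add: V0_def V_def)
      show "V0 \<subseteq> lists ?L"
      proof
        fix bss assume "bss \<in> V0"
        then obtain ws where ws: "ws \<in> W" "bss = map zi ws" by (auto simp: V0_def V_def)
        then have "ws \<in> lists Z" using W by blast
        then show "bss \<in> lists ?L" using mzi2 ws(2) by simp
      qed
      show "\<forall>bss\<in>V0. hdeg bss = n0" by (simp add: V0_def)
      show "\<forall>w. (\<Sum>bss\<in>V0. c' bss * HW \<iota> bss n0 w) = 0"
      proof
        fix w
        have "(\<Sum>bss\<in>V. c' bss * HW \<iota> bss n0 w) = (\<Sum>bss\<in>V. if hdeg bss = n0 then c' bss * HW \<iota> bss n0 w else 0)"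
          by (rule sum.cong[OF refl]) (use HW_homog in force)
        also have "\<dots> = (\<Sum>bss\<in>V0. c' bss * HW \<iota> bss n0 w)"
          unfolding V0_def using W by (subst sum.inter_filter) (simp_all add: V_def)
        finally show "(\<Sum>bss\<in>V0. c' bss * HW \<iota> bss n0 w) = 0" using S' by simp
      qed
    qed
    moreover have "bss0 \<in> V0" using ws0 by (simp add: V0_def V_def bss0_def n0_def)
    ultimately have "c' bss0 = 0" by blast
    moreover have "ws0 \<in> lists Z" using ws0 W by blast
    ultimately show "c ws0 = 0" unfolding c'_def bss0_def mzi1[OF \<open>ws0 \<in> lists Z\<close>] by blast
  qed
  have SPAN: "\<exists>W c. finite W \<and> W \<subseteq> lists Z \<and> x = (\<lambda>n w. \<Sum>ws\<in>W. c ws * Hword \<iota> ws n w)"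
    if x: "x \<in> H_carrier G Cl" for x
  proof -
    have "\<exists>V c. finite V \<and> V \<subseteq> lists ?L \<and> (\<forall>bss\<in>V. True) \<and>
      x = (\<lambda>k w. \<Sum>bss\<in>V. c bss * HW \<iota> bss k w)"
      using span_all[OF x] by (simp only: SPg_def mem_Collect_eq)
    then obtain V c where V: "finite V" "V \<subseteq> lists ?L"
      "x = (\<lambda>k w. \<Sum>bss\<in>V. c bss * HW \<iota> bss k w)"
      by blast
    define W where "W = map zz ` V"
    define c' where "c' ws = (\<Sum>bss\<in>{b\<in>V. map zz b = ws}. c bss)" for ws
    have "W \<subseteq> lists Z"
    proof
      fix ws assume "ws \<in> W"
      then obtain bss where b: "bss \<in> V" "ws = map zz bss" by (auto simp: W_def)
      then have "set bss \<subseteq> ?L" using V(2) by (auto simp: in_lists_conv_set)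
      then have "set ws \<subseteq> Z" using b(2) unfolding Z_def by auto
      then show "ws \<in> lists Z" by (simp add: in_lists_conv_set subset_iff)
    qed
    moreover have "finite W" using V(1) by (simp add: W_def)
    moreover have "x = (\<lambda>n w. \<Sum>ws\<in>W. c' ws * Hword \<iota> ws n w)"
    proof (intro ext)
      fix n w
      have "(\<Sum>ws\<in>W. c' ws * Hword \<iota> ws n w) =
            (\<Sum>ws\<in>W. \<Sum>bss\<in>{b\<in>V. map zz b = ws}. c bss * HW \<iota> bss n w)"
        unfolding c'_def sum_distrib_right HW_def by (rule sum.cong[OF refl], rule sum.cong[OF refl]) simp
      also have "\<dots> = (\<Sum>bss\<in>V. c bss * HW \<iota> bss n w)"
        unfolding W_def by (rule sum.image_gen[OF V(1), symmetric])
      finally show "x n w = (\<Sum>ws\<in>W. c' ws * Hword \<iota> ws n w)" using V(3) by simp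
    qed
    ultimately show ?thesis by blast
  qed
  have A: "\<forall>W c. finite W \<and> W \<subseteq> lists Z \<and>
               (\<lambda>n w. \<Sum>ws\<in>W. c ws * Hword \<iota> ws n w) = (\<lambda>n w. 0)
               \<longrightarrow> (\<forall>ws\<in>W. c ws = 0)"
  proof (intro allI impI)
    fix W c assume "finite W \<and> W \<subseteq> lists Z \<and> (\<lambda>n w. \<Sum>ws\<in>W. c ws * Hword \<iota> ws n w) = (\<lambda>n w. 0)"
    then show "\<forall>ws\<in>W. c ws = 0" using IND by (elim conjE)
  qed
  have B: "\<forall>x\<in>H_carrier G Cl. \<exists>W c. finite W \<and> W \<subseteq> lists Z \<and>
               x = (\<lambda>n w. \<Sum>ws\<in>W. c ws * Hword \<iota> ws n w)"
    using SPAN by (rule ballI)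
  show ?thesis unfolding H_free_algebra_def
  proof (rule exI[where x = Z])
    show "Z \<subseteq> H_carrier G Cl \<and>
        (\<forall>W c. finite W \<and> W \<subseteq> lists Z \<and>
               (\<lambda>n w. \<Sum>ws\<in>W. c ws * Hword \<iota> ws n w) = (\<lambda>n w. 0)
               \<longrightarrow> (\<forall>ws\<in>W. c ws = 0)) \<and>
        (\<forall>x\<in>H_carrier G Cl. \<exists>W c. finite W \<and> W \<subseteq> lists Z \<and>
               x = (\<lambda>n w. \<Sum>ws\<in>W. c ws * Hword \<iota> ws n w))"
      using ZH A B by (intro conjI)
  qed
qed

end

theorem mainTheorem2:
  fixes G :: "('g, 'b) monoid_scheme" and Cl :: "'g set set" and Ch :: "('g \<Rightarrow> complex) set"
    and \<iota> \<alpha> \<beta> :: "'g \<Rightarrow> complex"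
  assumes "group G" and "finite (carrier G)"
    and "supercharacter_theory G Cl Ch"
    and "\<iota> \<in> scf G Cl" and "\<alpha> \<in> scf G Cl" and "\<beta> \<in> scf G Cl"
    and "cinner G \<iota> \<alpha> = 1" and "cinner G \<iota> \<beta> = 1"
  shows "H_free_algebra G Cl \<iota>"
proof -
  have st: "\<Union>Cl = carrier G" "\<forall>B\<in>Cl. B \<noteq> {}" "\<forall>B\<in>Cl. \<forall>C\<in>Cl. B \<noteq> C \<longrightarrow> B \<inter> C = {}"
    using assms(3) unfolding supercharacter_theory_def by blast+
  have "(\<Sum>g\<in>carrier G. \<iota> g * cnj (\<alpha> g)) \<noteq> 0"
    using assms(7) unfolding cinner_def by auto
  then obtain g0 where g0: "g0 \<in> carrier G" "\<iota> g0 * cnj (\<alpha> g0) \<noteq> 0"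
    by (meson sum.neutral)
  then have i0: "\<iota> g0 \<noteq> 0" by auto
  obtain B0 where B0: "B0 \<in> Cl" "g0 \<in> B0" using g0(1) st(1) by blast
  interpret HF G Cl \<iota> g0 B0
    by unfold_locales (use st assms(2,4) B0 i0 in auto)
  show ?thesis by (rule free)
qed

end
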